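(* Let $P$ be a purely atomic Borel probability measure on $\mathbb{R}$ with support on $n$ points. Then any mean-preserving contraction $Q$ of $P$ is a mixture of simple mean-preserving contractions of $P$ each having support on at most $n$ points.
   Context: Let $P$ have support $\{a_1<\dots<a_n\}$ with masses $\vec p=(p_1,\dots,p_n)$, all positive, and $\vec{pa}=(p_1a_1,\dots,p_na_n)$. A purely atomic probability measure $Q$ with support on distinct points $b_1,\dots,b_m$ and positive masses $\vec q=(q_1,\dots,q_m)$ is a simple mean-preserving contraction (smpc) of $P$ if there is a non-negative row-stochastic $n\times m$ matrix $F$ with $\vec pF=\vec q$ and $(\vec{pa})F=(q_1b_1,\dots,q_mb_m)$. A Borel probability measure $R$ on $\mathbb{R}$ is a mean-preserving contraction (mpc) of $P$ if there is a sequence of smpcs of $P$ converging weakly to $R$. Mixtures of smpcs are convex combinations of the associated measures (for non-purely-atomic mpcs, understood via weak limits). *)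

theory Defs
  imports "HOL-Probability.Probability"
begin

text \<open>Atoms of a measure: points carrying positive mass. For a purely atomic P with
finite support these are exactly the support points a_1 < ... < a_n.\<close>
definition atoms :: "real measure \<Rightarrow> real set" where
  "atoms P = {x. measure P {x} > 0}"

definition finite_atomic :: "nat \<Rightarrow> (nat \<Rightarrow> real) \<Rightarrow> (nat \<Rightarrow> real) \<Rightarrow> real measure \<Rightarrow> bool" where
  "finite_atomic m b q Q \<longleftrightarrow>
     sets Q = sets borel \<and> inj_on b {..<m} \<and> (\<forall>j<m. q j > 0) \<and>
     (\<forall>S \<in> sets borel. emeasure Q S = (\<Sum>j\<in>{j. j < m \<and> b j \<in> S}. ennreal (q j)))"

text \<open>Simple mean-preserving contraction of P with support on m points:
there is a nonnegative row-stochastic matrix F (rows indexed by the support of P,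
columns by 0..m-1) with p F = q and (p a) F = (q_j b_j)_j.\<close>
definition smpc_m :: "real measure \<Rightarrow> nat \<Rightarrow> real measure \<Rightarrow> bool" where
  "smpc_m P m Q \<longleftrightarrow> (\<exists>b q F. finite_atomic m b q Q \<and>
     (\<forall>a\<in>atoms P. \<forall>j<m. F a j \<ge> (0::real)) \<and>
     (\<forall>a\<in>atoms P. (\<Sum>j<m. F a j) = 1) \<and>
     (\<forall>j<m. (\<Sum>a\<in>atoms P. measure P {a} * F a j) = q j) \<and>
     (\<forall>j<m. (\<Sum>a\<in>atoms P. measure P {a} * a * F a j) = q j * b j))"

definition smpc :: "real measure \<Rightarrow> real measure \<Rightarrow> bool" where
  "smpc P Q \<longleftrightarrow> (\<exists>m. smpc_m P m Q)"

definition mpc :: "real measure \<Rightarrow> real measure \<Rightarrow> bool" where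
  "mpc P R \<longleftrightarrow> real_distribution R \<and>
     (\<exists>Qs. (\<forall>k. smpc P (Qs k)) \<and> weak_conv_m Qs R)"

definition finite_mixture :: "(real measure \<Rightarrow> bool) \<Rightarrow> real measure \<Rightarrow> bool" where
  "finite_mixture C R \<longleftrightarrow> (\<exists>(K::nat) w Qs.
     (\<forall>i<K. w i \<ge> (0::real) \<and> C (Qs i)) \<and> (\<Sum>i<K. w i) = 1 \<and>
     sets R = sets borel \<and>
     (\<forall>S\<in>sets borel. emeasure R S = (\<Sum>i<K. ennreal (w i) * emeasure (Qs i) S)))"

end

theory Submission
  imports Defs
begin

lemma homog_solution:
  fixes c :: "'e \<Rightarrow> 'x \<Rightarrow> real"
  assumes "finite E" "finite X" "card E < card X"
  shows "\<exists>d. (\<forall>x. x \<notin> X \<longrightarrow> d x = 0) \<and> (\<exists>x\<in>X. d x \<noteq> 0) \<and>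
             (\<forall>e\<in>E. (\<Sum>x\<in>X. c e x * d x) = 0)"
  using assms
proof (induction E arbitrary: X c rule: finite_induct)
  case empty
  then obtain x where "x \<in> X" by fastforce
  then show ?case by (intro exI[of _ "\<lambda>y. if y = x then 1 else 0"]) auto
next
  case (insert e E)
  show ?case
  proof (cases "\<forall>x\<in>X. c e x = 0")
    case True
    have "card E < card X" using insert by simp
    from insert.IH[OF \<open>finite X\<close> this] obtain d where d:
      "\<forall>x. x \<notin> X \<longrightarrow> d x = 0" "\<exists>x\<in>X. d x \<noteq> 0" "\<forall>e\<in>E. (\<Sum>x\<in>X. c e x * d x) = 0"
      by blast
    show ?thesis using d True by (intro exI[of _ d]) auto
  next
    case False
    then obtain x0 where x0: "x0 \<in> X" "c e x0 \<noteq> 0" by blast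
    define X' where "X' = X - {x0}"
    have fX': "finite X'" using insert by (simp add: X'_def)
    have cX': "card E < card X'" using insert x0 by (simp add: X'_def card_Diff_singleton)
    define c' where "c' = (\<lambda>e' x. c e' x - c e' x0 * c e x / c e x0)"
    from insert.IH[OF fX' cX', of c'] obtain d' where d':
      "\<forall>x. x \<notin> X' \<longrightarrow> d' x = 0" "\<exists>x\<in>X'. d' x \<noteq> 0" "\<forall>e'\<in>E. (\<Sum>x\<in>X'. c' e' x * d' x) = 0"
      by blast
    define d where "d = d'(x0 := - (\<Sum>x\<in>X'. c e x * d' x) / c e x0)"
    have X: "X = insert x0 X'" "x0 \<notin> X'" using x0 by (auto simp: X'_def)
    have sumX: "(\<Sum>x\<in>X. g x * d x) = g x0 * d x0 + (\<Sum>x\<in>X'. g x * d' x)" for g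
    proof -
      have "(\<Sum>x\<in>X. g x * d x) = g x0 * d x0 + (\<Sum>x\<in>X'. g x * d x)"
        using X fX' by simp
      also have "(\<Sum>x\<in>X'. g x * d x) = (\<Sum>x\<in>X'. g x * d' x)"
        using X by (intro sum.cong) (auto simp: d_def)
      finally show ?thesis .
    qed
    have "\<forall>e'\<in>insert e E. (\<Sum>x\<in>X. c e' x * d x) = 0"
    proof
      fix e' assume e': "e' \<in> insert e E"
      show "(\<Sum>x\<in>X. c e' x * d x) = 0"
      proof (cases "e' = e")
        case True
        then show ?thesis using x0 unfolding sumX by (simp add: d_def)
      next
        case False
        then have "e' \<in> E" using e' by auto
        then have "(\<Sum>x\<in>X'. c' e' x * d' x) = 0" using d' by auto
        then have "(\<Sum>x\<in>X'. c e' x * d' x) - c e' x0 / c e x0 * (\<Sum>x\<in>X'. c e x * d' x) = 0"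
          by (simp add: c'_def algebra_simps sum_subtractf sum_distrib_left)
        then show ?thesis using x0 unfolding sumX by (simp add: d_def field_simps)
      qed
    qed
    moreover have "\<forall>x. x \<notin> X \<longrightarrow> d x = 0" using d' X by (auto simp: d_def)
    moreover have "\<exists>x\<in>X. d x \<noteq> 0" using d' X by (auto simp: d_def)
    ultimately show ?thesis by blast
  qed
qed

definition feas :: "real set \<Rightarrow> (real \<Rightarrow> real) \<Rightarrow> nat set \<Rightarrow> (nat \<Rightarrow> real) \<Rightarrow> (real \<Rightarrow> nat \<Rightarrow> real) \<Rightarrow> bool" where
  "feas A p J b \<pi> \<longleftrightarrow> (\<forall>a j. (a \<notin> A \<or> j \<notin> J) \<longrightarrow> \<pi> a j = 0) \<and> (\<forall>a\<in>A. \<forall>j\<in>J. \<pi> a j \<ge> 0) \<and>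
     (\<forall>a\<in>A. (\<Sum>j\<in>J. \<pi> a j) = p a) \<and> (\<forall>j\<in>J. (\<Sum>a\<in>A. \<pi> a j * (a - b j)) = 0)"

definition cols :: "real set \<Rightarrow> nat set \<Rightarrow> (real \<Rightarrow> nat \<Rightarrow> real) \<Rightarrow> nat set" where
  "cols A J \<pi> = {j\<in>J. \<exists>a\<in>A. \<pi> a j \<noteq> 0}"

definition psupp :: "real set \<Rightarrow> nat set \<Rightarrow> (real \<Rightarrow> nat \<Rightarrow> real) \<Rightarrow> (nat \<times> real) set" where
  "psupp A J \<pi> = {(j,a). j \<in> J \<and> a \<in> A \<and> \<pi> a j \<noteq> 0}"

definition mixable :: "((real \<Rightarrow> nat \<Rightarrow> real) \<Rightarrow> bool) \<Rightarrow> (real \<Rightarrow> nat \<Rightarrow> real) \<Rightarrow> bool" where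
  "mixable S \<pi> \<longleftrightarrow> (\<exists>(K::nat) w \<sigma>s. (\<forall>i<K. 0 \<le> w i \<and> S (\<sigma>s i)) \<and> (\<Sum>i<K. w i) = (1::real) \<and>
      (\<forall>a j. \<pi> a j = (\<Sum>i<K. w i * \<sigma>s i a j)))"

lemma mixable_single: "S \<pi> \<Longrightarrow> mixable S \<pi>"
  unfolding mixable_def by (intro exI[of _ 1] exI[of _ "\<lambda>_. 1"] exI[of _ "\<lambda>_. \<pi>"]) auto

lemma mixable_comb:
  assumes "mixable S \<pi>1" "mixable S \<pi>2" "0 \<le> l" "l \<le> 1"
    and "\<And>a j. \<pi> a j = l * \<pi>1 a j + (1 - l) * \<pi>2 a j"
  shows "mixable S \<pi>"
proof -
  obtain K1 w1 s1 where 1: "\<forall>i<(K1::nat). (0::real) \<le> w1 i \<and> S (s1 i)" "(\<Sum>i<K1. w1 i) = 1"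
     "\<forall>a j. \<pi>1 a j = (\<Sum>i<K1. w1 i * s1 i a j)" using assms(1) unfolding mixable_def by blast
  obtain K2 w2 s2 where 2: "\<forall>i<(K2::nat). (0::real) \<le> w2 i \<and> S (s2 i)" "(\<Sum>i<K2. w2 i) = 1"
     "\<forall>a j. \<pi>2 a j = (\<Sum>i<K2. w2 i * s2 i a j)" using assms(2) unfolding mixable_def by blast
  define w where "w = (\<lambda>i. if i < K1 then l * w1 i else (1 - l) * w2 (i - K1))"
  define s where "s = (\<lambda>i. if i < K1 then s1 i else s2 (i - K1))"
  have split: "(\<Sum>i<K1+K2. f i) = (\<Sum>i<K1. f i) + (\<Sum>i<K2. f (K1 + i))" for f :: "nat \<Rightarrow> real"
  proof (induction K2)
    case 0 show ?case by simp
  next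
    case (Suc K2)
    have "K1 + Suc K2 = Suc (K1 + K2)" by simp
    then show ?case by (simp only: sum.lessThan_Suc Suc.IH)
  qed
  show ?thesis unfolding mixable_def
  proof (intro exI[of _ "K1+K2"] exI[of _ w] exI[of _ s] conjI)
    show "\<forall>i<K1 + K2. 0 \<le> w i \<and> S (s i)" using 1 2 assms(3,4) by (auto simp: w_def s_def)
  next
    show "(\<Sum>i<K1 + K2. w i) = 1" unfolding split using 1 2
      by (simp add: w_def sum_distrib_left[symmetric])
  next
    show "\<forall>a j. \<pi> a j = (\<Sum>i<K1 + K2. w i * s i a j)" unfolding split using 1 2 assms(5)
      by (simp add: w_def s_def sum_distrib_left mult.assoc)
  qed
qed

lemma move:
  assumes fin: "finite A" "finite J" and f: "feas A p J b \<pi>"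
    and R: "\<forall>a\<in>A. (\<Sum>j\<in>J. D j a) = 0"
    and C: "\<forall>j\<in>J. (\<Sum>a\<in>A. D j a * (a - b j)) = 0"
    and Z: "\<forall>j a. (j,a) \<notin> psupp A J \<pi> \<longrightarrow> D j a = 0"
    and neg: "D j0 a0 < 0"
  shows "\<exists>t>0. feas A p J b (\<lambda>a j. \<pi> a j + t * D j a) \<and>
           card (psupp A J (\<lambda>a j. \<pi> a j + t * D j a)) < card (psupp A J \<pi>)"
proof -
  define N where "N = {x \<in> psupp A J \<pi>. D (fst x) (snd x) < 0}"
  have "psupp A J \<pi> \<subseteq> J \<times> A" by (auto simp: psupp_def)
  then have finS: "finite (psupp A J \<pi>)" using fin by (meson finite_SigmaI finite_subset)
  have finN: "finite N" using finS by (simp add: N_def)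
  have "(j0,a0) \<in> psupp A J \<pi>"
  proof (rule ccontr)
    assume "(j0,a0) \<notin> psupp A J \<pi>"
    then have "D j0 a0 = 0" using Z by blast
    then show False using neg by simp
  qed
  then have "(j0,a0) \<in> N" using neg by (auto simp: N_def)
  then have Nne: "N \<noteq> {}" by auto
  define g where "g = (\<lambda>x. \<pi> (snd x) (fst x) / (- D (fst x) (snd x)))"
  define t where "t = Min (g ` N)"
  have pos: "\<pi> (snd x) (fst x) > 0" if "x \<in> psupp A J \<pi>" for x
    using that f unfolding psupp_def feas_def by (cases x) (auto simp: less_le)
  have tin: "t \<in> g ` N" unfolding t_def using finN Nne by simp
  then obtain x where x: "x \<in> N" "t = g x" by auto
  have tpos: "t > 0" using x pos[of x] by (auto simp: N_def g_def divide_pos_neg)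
  have tle: "t \<le> g y" if "y \<in> N" for y unfolding t_def using finN that by simp
  define \<pi>' where "\<pi>' = (\<lambda>a j. \<pi> a j + t * D j a)"
  have feas': "feas A p J b \<pi>'"
    unfolding feas_def
  proof (intro conjI ballI allI impI)
    fix a j assume "a \<notin> A \<or> j \<notin> J"
    then show "\<pi>' a j = 0" using f Z by (auto simp: \<pi>'_def feas_def psupp_def)
  next
    fix a j assume a: "a \<in> A" and j: "j \<in> J"
    show "0 \<le> \<pi>' a j"
    proof (cases "D j a < 0")
      case True
      then have jaS: "(j,a) \<in> psupp A J \<pi>" using Z by force
      then have "(j,a) \<in> N" using True by (simp add: N_def)
      then have "t \<le> \<pi> a j / (- D j a)" using tle[of "(j,a)"] by (simp add: g_def)
      then have "t * (- D j a) \<le> \<pi> a j" using True by (metis neg_0_less_iff_less pos_le_divide_eq)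
      then show ?thesis by (simp add: \<pi>'_def)
    next
      case False
      then show ?thesis using f a j tpos by (simp add: \<pi>'_def feas_def)
    qed
  next
    fix a assume a: "a \<in> A"
    have "(\<Sum>j\<in>J. \<pi>' a j) = (\<Sum>j\<in>J. \<pi> a j) + t * (\<Sum>j\<in>J. D j a)"
      by (simp add: \<pi>'_def sum.distrib sum_distrib_left)
    then show "(\<Sum>j\<in>J. \<pi>' a j) = p a" using f R a by (simp add: feas_def)
  next
    fix j assume j: "j \<in> J"
    have "(\<Sum>a\<in>A. \<pi>' a j * (a - b j)) = (\<Sum>a\<in>A. \<pi> a j * (a - b j) + t * (D j a * (a - b j)))"
      by (rule sum.cong) (simp_all add: \<pi>'_def algebra_simps)
    also have "\<dots> = (\<Sum>a\<in>A. \<pi> a j * (a - b j)) + t * (\<Sum>a\<in>A. D j a * (a - b j))"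
      by (simp add: sum.distrib sum_distrib_left)
    finally have "(\<Sum>a\<in>A. \<pi>' a j * (a - b j)) = (\<Sum>a\<in>A. \<pi> a j * (a - b j)) + t * (\<Sum>a\<in>A. D j a * (a - b j))" .
    then show "(\<Sum>a\<in>A. \<pi>' a j * (a - b j)) = 0" using f C j by (simp add: feas_def)
  qed
  have sub: "psupp A J \<pi>' \<subseteq> psupp A J \<pi>" using Z by (auto simp: psupp_def \<pi>'_def)
  have "x \<in> psupp A J \<pi>" using x by (simp add: N_def)
  moreover have "x \<notin> psupp A J \<pi>'"
  proof -
    have "D (fst x) (snd x) < 0" using x by (simp add: N_def)
    then have "\<pi>' (snd x) (fst x) = 0" using x by (simp add: \<pi>'_def g_def)
    then show ?thesis by (auto simp: psupp_def)
  qed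
  ultimately have "psupp A J \<pi>' < psupp A J \<pi>" using sub by blast
  then have "card (psupp A J \<pi>') < card (psupp A J \<pi>)" using finS by (simp add: psubset_card_mono)
  then show ?thesis using tpos feas' unfolding \<pi>'_def by blast
qed

lemma sum_over_supp:
  fixes f d :: "nat \<times> real \<Rightarrow> real"
  assumes "finite A" "finite J" "X \<subseteq> J \<times> A"
    and "\<forall>x. x \<notin> X \<longrightarrow> d x = 0"
  shows "(\<Sum>x\<in>X. f x * d x) = (\<Sum>j\<in>J. \<Sum>a\<in>A. f (j,a) * d (j,a))"
proof -
  have fin: "finite (J \<times> A)" using assms by simp
  have "(\<Sum>x\<in>X. f x * d x) = (\<Sum>x\<in>J \<times> A. f x * d x)"
    by (rule sum.mono_neutral_left[OF fin]) (use assms in auto)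
  also have "\<dots> = (\<Sum>j\<in>J. \<Sum>a\<in>A. f (j,a) * d (j,a))"
    by (simp add: sum.cartesian_product)
  finally show ?thesis .
qed

lemma exists_neg:
  fixes D :: "nat \<Rightarrow> real \<Rightarrow> real"
  assumes "finite J" "\<forall>a\<in>A. (\<Sum>j\<in>J. D j a) = 0" "j0 \<in> J" "a0 \<in> A" "D j0 a0 \<noteq> 0"
  shows "\<exists>j a. D j a < 0"
proof (rule ccontr)
  assume H: "\<not> (\<exists>j a. D j a < 0)"
  have nn: "\<forall>j\<in>J. 0 \<le> D j a0"
  proof
    fix j assume "j \<in> J"
    show "0 \<le> D j a0"
    proof (rule ccontr)
      assume "\<not> 0 \<le> D j a0"
      then have "D j a0 < 0" by simp
      then show False using H by blast
    qed
  qed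
  have "(\<Sum>j\<in>J. D j a0) = 0" using assms(2,4) by simp
  then have "\<forall>j\<in>J. D j a0 = 0" using sum_nonneg_eq_0_iff[OF assms(1), of "\<lambda>j. D j a0"] nn by simp
  then show False using assms(3,5) by simp
qed

lemma decomp:
  assumes fA: "finite A" and fJ: "finite J" and f0: "feas A p J b \<pi>0"
  shows "mixable (\<lambda>\<sigma>. feas A p J b \<sigma> \<and> card (cols A J \<sigma>) \<le> card A) \<pi>0"
proof -
  define S where "S = (\<lambda>\<sigma>. feas A p J b \<sigma> \<and> card (cols A J \<sigma>) \<le> card A)"
  have "\<forall>\<pi>. card (psupp A J \<pi>) = N \<longrightarrow> feas A p J b \<pi> \<longrightarrow> mixable S \<pi>" for N
  proof (induction N rule: less_induct)
    case (less N)
    show ?case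
    proof (intro allI impI)
      fix \<pi> assume cN: "card (psupp A J \<pi>) = N" and f: "feas A p J b \<pi>"
      show "mixable S \<pi>"
      proof (cases "card (cols A J \<pi>) \<le> card A")
        case True
        then show ?thesis using f by (intro mixable_single) (simp add: S_def)
      next
        case False
        define col where "col = (\<lambda>j. {a\<in>A. \<pi> a j \<noteq> 0})"
        define X where "X = psupp A J \<pi>"
        define J2 where "J2 = {j\<in>J. 2 \<le> card (col j)}"
        define E :: "(real + nat) set" where "E = Inl ` A \<union> Inr ` J2"
        define c :: "real + nat \<Rightarrow> nat \<times> real \<Rightarrow> real" where
          "c = (\<lambda>e x. case e of Inl a \<Rightarrow> (if snd x = a then 1 else 0)
                             | Inr j \<Rightarrow> (if fst x = j then snd x - b j else 0))"
        have fcol: "finite (col j)" for j using fA by (simp add: col_def)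
        have XS: "X = (SIGMA j:J. col j)" by (auto simp: X_def psupp_def col_def)
        have XJA: "X \<subseteq> J \<times> A" by (auto simp: X_def psupp_def)
        have fX: "finite X" using XS fJ fcol by simp
        have cardX: "card X = (\<Sum>j\<in>J. card (col j))" using XS fJ fcol by simp
        have fJ2: "finite J2" using fJ by (simp add: J2_def)
        have fE: "finite E" using fA fJ2 by (simp add: E_def)
        have cardE: "card E = card A + card J2"
          unfolding E_def using fA fJ2
          by (subst card_Un_disjoint) (auto simp: card_image)
        have colsEq: "cols A J \<pi> = {j\<in>J. col j \<noteq> {}}" by (auto simp: cols_def col_def)
        have cnt: "card {j\<in>J. P j} = (\<Sum>j\<in>J. if P j then 1 else 0)" for P
          using fJ by (simp add: sum.inter_filter[symmetric])
        have "(\<Sum>j\<in>J. (if col j \<noteq> {} then 1 else 0) + (if j \<in> J2 then 1 else 0)) \<le> (\<Sum>j\<in>J. card (col j))"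
        proof (rule sum_mono)
          fix j assume "j \<in> J"
          show "(if col j \<noteq> {} then 1 else 0) + (if j \<in> J2 then 1 else 0) \<le> card (col j)"
            using fcol[of j] by (auto simp: J2_def card_gt_0_iff Suc_le_eq)
        qed
        also have "(\<Sum>j\<in>J. (if col j \<noteq> {} then 1 else 0) + (if j \<in> J2 then 1 else 0)) =
             card (cols A J \<pi>) + card J2"
          unfolding colsEq J2_def cnt by (simp add: sum.distrib)
        finally have "card (cols A J \<pi>) + card J2 \<le> card X" using cardX by simp
        then have "card E < card X" using False cardE by simp
        from homog_solution[OF fE fX this, of c] obtain d where d:
          "\<forall>x. x \<notin> X \<longrightarrow> d x = 0" "\<exists>x\<in>X. d x \<noteq> 0" "\<forall>e\<in>E. (\<Sum>x\<in>X. c e x * d x) = 0"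
          by blast
        define D where "D = (\<lambda>j a. d (j, a))"
        have conv: "(\<Sum>x\<in>X. c e x * d x) = (\<Sum>j\<in>J. \<Sum>a\<in>A. c e (j,a) * D j a)" for e
          unfolding D_def by (rule sum_over_supp[OF fA fJ XJA d(1)])
        have R: "\<forall>a\<in>A. (\<Sum>j\<in>J. D j a) = 0"
        proof
          fix a assume a: "a \<in> A"
          have "Inl a \<in> E" using a by (simp add: E_def)
          then have "(\<Sum>j\<in>J. \<Sum>a'\<in>A. c (Inl a) (j,a') * D j a') = 0" using d(3) conv by metis
          moreover have "(\<Sum>a'\<in>A. c (Inl a) (j,a') * D j a') = D j a" for j
            using a fA by (simp add: c_def if_distrib[where f="\<lambda>x. x * _"] sum.delta cong: if_cong)
          ultimately show "(\<Sum>j\<in>J. D j a) = 0" by simp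
        qed
        have Z: "\<forall>j a. (j,a) \<notin> psupp A J \<pi> \<longrightarrow> D j a = 0" using d(1) by (simp add: D_def X_def)
        have C: "\<forall>j\<in>J. (\<Sum>a\<in>A. D j a * (a - b j)) = 0"
        proof
          fix j assume j: "j \<in> J"
          show "(\<Sum>a\<in>A. D j a * (a - b j)) = 0"
          proof (cases "j \<in> J2")
            case True
            then have "Inr j \<in> E" by (simp add: E_def)
            then have "(\<Sum>j'\<in>J. \<Sum>a\<in>A. c (Inr j) (j',a) * D j' a) = 0" using d(3) conv by metis
            moreover have "(\<Sum>j'\<in>J. \<Sum>a\<in>A. c (Inr j) (j',a) * D j' a) = (\<Sum>a\<in>A. D j a * (a - b j))"
            proof -
              have "(\<Sum>j'\<in>J. \<Sum>a\<in>A. c (Inr j) (j',a) * D j' a) =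
                    (\<Sum>j'\<in>J. if j' = j then (\<Sum>a\<in>A. (a - b j) * D j a) else 0)"
                by (rule sum.cong) (auto simp: c_def)
              also have "\<dots> = (\<Sum>a\<in>A. D j a * (a - b j))" using j fJ by (simp add: mult.commute)
              finally show ?thesis .
            qed
            ultimately show ?thesis by simp
          next
            case False
            then have cle: "card (col j) \<le> 1" using j by (simp add: J2_def)
            have sD: "(\<Sum>a\<in>A. D j a * (a - b j)) = (\<Sum>a\<in>col j. D j a * (a - b j))"
              using fA Z j by (intro sum.mono_neutral_right) (auto simp: col_def psupp_def)
            have sP: "(\<Sum>a\<in>A. \<pi> a j * (a - b j)) = (\<Sum>a\<in>col j. \<pi> a j * (a - b j))"
              using fA by (intro sum.mono_neutral_right) (auto simp: col_def)
            show ?thesis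
            proof (cases "col j = {}")
              case True
              then show ?thesis using sD by simp
            next
              case False
              have "card (col j) \<noteq> 0" using False fcol[of j] by simp
              then have "card (col j) = 1" using cle by simp
              then obtain a0 where c1: "col j = {a0}" by (rule card_1_singletonE)
              have "\<pi> a0 j \<noteq> 0" using c1 by (auto simp: col_def)
              moreover have "(\<Sum>a\<in>A. \<pi> a j * (a - b j)) = 0" using f j by (simp add: feas_def)
              then have "\<pi> a0 j * (a0 - b j) = 0" using sP c1 by simp
              ultimately have "a0 = b j" by simp
              then show ?thesis using sD c1 by simp
            qed
          qed
        qed
        obtain x where x: "x \<in> X" "d x \<noteq> 0" using d(2) by blast
        obtain j0 a0 where ja0: "x = (j0, a0)" by (cases x)
        have ja0': "j0 \<in> J" "a0 \<in> A" "D j0 a0 \<noteq> 0" using x XJA ja0 by (auto simp: D_def)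
        obtain j1 a1 where n1: "D j1 a1 < 0" using exists_neg[OF fJ R ja0'] by blast
        have R': "\<forall>a\<in>A. (\<Sum>j\<in>J. - D j a) = 0" using R by (simp add: sum_negf)
        have C': "\<forall>j\<in>J. (\<Sum>a\<in>A. - D j a * (a - b j)) = 0" using C by (simp add: sum_negf)
        have Z': "\<forall>j a. (j,a) \<notin> psupp A J \<pi> \<longrightarrow> - D j a = 0" using Z by simp
        obtain j2 a2 where n2: "- D j2 a2 < 0" using exists_neg[OF fJ R', of j0 a0] ja0' by auto
        obtain t1 where t1: "t1 > 0" "feas A p J b (\<lambda>a j. \<pi> a j + t1 * D j a)"
          "card (psupp A J (\<lambda>a j. \<pi> a j + t1 * D j a)) < card (psupp A J \<pi>)"
          using move[OF fA fJ f R C Z n1] by blast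
        obtain t2 where t2: "t2 > 0" "feas A p J b (\<lambda>a j. \<pi> a j + t2 * - D j a)"
          "card (psupp A J (\<lambda>a j. \<pi> a j + t2 * - D j a)) < card (psupp A J \<pi>)"
          using move[OF fA fJ f R' C' Z' n2] by blast
        have m1: "mixable S (\<lambda>a j. \<pi> a j + t1 * D j a)" using less.IH t1 cN by blast
        have m2: "mixable S (\<lambda>a j. \<pi> a j + t2 * - D j a)" using less.IH t2 cN by blast
        show ?thesis
        proof (rule mixable_comb[OF m1 m2, of "t2 / (t1 + t2)"])
          show "0 \<le> t2 / (t1 + t2)" "t2 / (t1 + t2) \<le> 1" using t1 t2 by auto
          fix a j
          have s: "t1 + t2 > 0" using t1 t2 by simp
          have e1: "1 - t2 / (t1 + t2) = t1 / (t1 + t2)" using s by (simp add: field_simps)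
          have e2: "t2 * (\<pi> a j + t1 * D j a) + t1 * (\<pi> a j + t2 * - D j a) = (t1 + t2) * \<pi> a j"
            by (simp add: algebra_simps)
          have "t2 / (t1 + t2) * (\<pi> a j + t1 * D j a) + t1 / (t1 + t2) * (\<pi> a j + t2 * - D j a)
                = (t2 * (\<pi> a j + t1 * D j a) + t1 * (\<pi> a j + t2 * - D j a)) / (t1 + t2)"
            by (simp add: add_divide_distrib)
          also have "\<dots> = \<pi> a j" using s unfolding e2 by simp
          finally show "\<pi> a j = t2 / (t1 + t2) * (\<pi> a j + t1 * D j a) + (1 - t2 / (t1 + t2)) * (\<pi> a j + t2 * - D j a)"
            unfolding e1 by simp
        qed
      qed
    qed
  qed
  then show ?thesis using f0 unfolding S_def by blast
qed

lemma fin_repr: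
  fixes M :: "real measure"
  assumes M: "prob_space M" and sM: "sets M = sets borel" and fB: "finite B"
    and B1: "emeasure M B = 1" and S: "S \<in> sets borel"
  shows "measure M S = (\<Sum>x\<in>S \<inter> B. measure M {x})"
proof -
  interpret prob_space M by fact
  have Bs: "B \<in> sets M" using sM borel_closed[OF finite_imp_closed[OF fB]] by simp
  have "prob B = 1" using B1 by (simp add: emeasure_eq_measure)
  then have ae: "AE x in M. x \<in> B" using AE_in_set_eq_1[OF Bs] by simp
  have SB: "S \<inter> B \<in> sets M" using Bs S sM by auto
  have "measure M S = measure M (S \<inter> B)"
    by (rule measure_eq_AE) (use ae S sM SB in auto)
  also have "\<dots> = (\<Sum>x\<in>S \<inter> B. measure M {x})"
    using fB sM by (intro measure_eq_sum_singleton) auto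
  finally show ?thesis .
qed

lemma atoms_eq:
  fixes P :: "real measure"
  assumes "prob_space P" "sets P = sets borel" "finite A" "emeasure P A = 1"
    "\<forall>a\<in>A. measure P {a} > 0"
  shows "atoms P = A"
proof -
  have "measure P {x} = 0" if "x \<notin> A" for x
    using fin_repr[OF assms(1-4), of "{x}"] that by simp
  then show ?thesis using assms(5) unfolding atoms_def by force
qed

definition mkQ :: "nat set \<Rightarrow> (nat \<Rightarrow> real) \<Rightarrow> (nat \<Rightarrow> real) \<Rightarrow> real measure" where
  "mkQ J b c = distr (point_measure J (\<lambda>j. ennreal (c j))) borel b"

lemma sets_mkQ: "sets (mkQ J b c) = sets borel" by (simp add: mkQ_def)

lemma emeasure_mkQ:
  assumes "finite J" "S \<in> sets borel"
  shows "emeasure (mkQ J b c) S = (\<Sum>j\<in>{j\<in>J. b j \<in> S}. ennreal (c j))"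
proof -
  have "emeasure (mkQ J b c) S = emeasure (point_measure J (\<lambda>j. ennreal (c j))) (b -` S \<inter> J)"
    unfolding mkQ_def using assms by (subst emeasure_distr) (auto simp: space_point_measure)
  also have "\<dots> = (\<Sum>j\<in>b -` S \<inter> J. ennreal (c j))"
    using assms by (intro emeasure_point_measure_finite) auto
  also have "b -` S \<inter> J = {j\<in>J. b j \<in> S}" by auto
  finally show ?thesis .
qed

lemma feas_smpc:
  assumes fA: "finite A" and fJ: "finite J" and ib: "inj_on b J" and at: "atoms P = A"
    and pos: "\<forall>a\<in>A. measure P {a} > 0" and f: "feas A (\<lambda>a. measure P {a}) J b \<sigma>"
  shows "smpc_m P (card (cols A J \<sigma>)) (mkQ J b (\<lambda>j. \<Sum>a\<in>A. \<sigma> a j))"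
proof -
  define p where "p = (\<lambda>a. measure P {a})"
  define Js where "Js = cols A J \<sigma>"
  define m where "m = card Js"
  define c where "c = (\<lambda>j. \<Sum>a\<in>A. \<sigma> a j)"
  have JsJ: "Js \<subseteq> J" by (auto simp: Js_def cols_def)
  have fJs: "finite Js" using JsJ fJ finite_subset by blast
  obtain e where e: "bij_betw e {..<m} Js"
    using ex_bij_betw_nat_finite[OF fJs] by (auto simp: m_def atLeast0LessThan)
  have eJ: "i < m \<Longrightarrow> e i \<in> Js" for i using e by (auto simp: bij_betw_def)
  have ie: "inj_on e {..<m}" using e by (auto simp: bij_betw_def)
  have eimg: "e ` {..<m} = Js" using e by (auto simp: bij_betw_def)
  have fs: "\<forall>a j. (a \<notin> A \<or> j \<notin> J) \<longrightarrow> \<sigma> a j = 0" "\<forall>a\<in>A. \<forall>j\<in>J. \<sigma> a j \<ge> 0"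
     "\<forall>a\<in>A. (\<Sum>j\<in>J. \<sigma> a j) = p a" "\<forall>j\<in>J. (\<Sum>a\<in>A. \<sigma> a j * (a - b j)) = 0"
    using f by (auto simp: feas_def p_def)
  have c0: "c j = 0" if "j \<in> J" "j \<notin> Js" for j
    using that by (auto simp: c_def Js_def cols_def)
  have cpos: "c j > 0" if jJs: "j \<in> Js" for j
  proof -
    have "j \<in> cols A J \<sigma>" using jJs by (simp add: Js_def)
    then obtain a where a: "a \<in> A" "\<sigma> a j \<noteq> 0" unfolding cols_def by blast
    have "j \<in> J" using jJs JsJ by auto
    then have "\<sigma> a j > 0" using a fs by force
    also have "\<sigma> a j \<le> c j" unfolding c_def
      using fA a \<open>j \<in> J\<close> fs by (intro member_le_sum) auto
    finally show ?thesis .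
  qed
  have cnn: "c j \<ge> 0" if "j \<in> J" for j using that fs by (auto simp: c_def intro!: sum_nonneg)
  have sumJs: "(\<Sum>j\<in>J. g j) = (\<Sum>i<m. g (e i))" if "\<forall>j\<in>J - Js. g j = 0" for g :: "nat \<Rightarrow> real"
  proof -
    have "(\<Sum>j\<in>J. g j) = (\<Sum>j\<in>Js. g j)" using that fJ JsJ by (intro sum.mono_neutral_right) auto
    also have "\<dots> = (\<Sum>i<m. g (e i))" using sum.reindex[OF ie, of g] eimg by simp
    finally show ?thesis .
  qed
  define F where "F = (\<lambda>a i. \<sigma> a (e i) / p a)"
  have pp: "p a > 0" if "a \<in> A" for a using pos that by (simp add: p_def)
  show ?thesis unfolding smpc_m_def at Js_def[symmetric] m_def[symmetric]
  proof (rule exI[of _ "b \<circ> e"], rule exI[of _ "\<lambda>i. c (e i)"], rule exI[of _ F], intro conjI ballI allI impI)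
    show "finite_atomic m (b \<circ> e) (\<lambda>i. c (e i)) (mkQ J b (\<lambda>j. \<Sum>a\<in>A. \<sigma> a j))"
      unfolding finite_atomic_def
    proof (intro conjI ballI allI impI)
      show "sets (mkQ J b (\<lambda>j. \<Sum>a\<in>A. \<sigma> a j)) = sets borel" by (rule sets_mkQ)
      show "inj_on (b \<circ> e) {..<m}"
        using ie ib JsJ eimg by (intro comp_inj_on) (auto intro: inj_on_subset)
      fix j assume "j < m" then show "0 < c (e j)" using cpos eJ by auto
    next
      fix S :: "real set" assume S: "S \<in> sets borel"
      have R: "(\<Sum>j\<in>{j\<in>J. b j \<in> S}. c j) = (\<Sum>i\<in>{i. i < m \<and> (b \<circ> e) i \<in> S}. c (e i))"
      proof -
        have "(\<Sum>j\<in>{j\<in>J. b j \<in> S}. c j) = (\<Sum>j\<in>J. if b j \<in> S then c j else 0)"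
          using fJ by (simp add: sum.inter_filter)
        also have "\<dots> = (\<Sum>i<m. if b (e i) \<in> S then c (e i) else 0)" using c0 by (intro sumJs) auto
        also have "\<dots> = (\<Sum>i\<in>{i. i < m \<and> (b \<circ> e) i \<in> S}. c (e i))"
          by (simp add: sum.inter_filter[symmetric] lessThan_def)
        finally show ?thesis .
      qed
      have "emeasure (mkQ J b (\<lambda>j. \<Sum>a\<in>A. \<sigma> a j)) S = (\<Sum>j\<in>{j\<in>J. b j \<in> S}. ennreal (c j))"
        using emeasure_mkQ[OF fJ S] by (simp add: c_def)
      also have "\<dots> = ennreal (\<Sum>j\<in>{j\<in>J. b j \<in> S}. c j)" using cnn by (intro sum_ennreal) auto
      also have "\<dots> = ennreal (\<Sum>i\<in>{i. i < m \<and> (b \<circ> e) i \<in> S}. c (e i))" unfolding R ..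
      also have "\<dots> = (\<Sum>i\<in>{i. i < m \<and> (b \<circ> e) i \<in> S}. ennreal (c (e i)))"
        using cnn eJ JsJ by (intro sum_ennreal[symmetric]) auto
      finally show "emeasure (mkQ J b (\<lambda>j. \<Sum>a\<in>A. \<sigma> a j)) S = (\<Sum>i\<in>{i. i < m \<and> (b \<circ> e) i \<in> S}. ennreal (c (e i)))" .
    qed
  next
    fix a i assume a: "a \<in> A" and i: "i < m"
    have "e i \<in> J" using eJ[OF i] JsJ by auto
    then have "0 \<le> \<sigma> a (e i)" using fs a by auto
    then show "0 \<le> F a i" using pp[OF a] by (simp add: F_def)
  next
    fix a assume a: "a \<in> A"
    have "(\<Sum>i<m. F a i) = (\<Sum>i<m. \<sigma> a (e i)) / p a" by (simp add: F_def sum_divide_distrib)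
    also have "(\<Sum>i<m. \<sigma> a (e i)) = (\<Sum>j\<in>J. \<sigma> a j)"
      using a by (intro sumJs[symmetric]) (auto simp: Js_def cols_def)
    finally show "(\<Sum>i<m. F a i) = 1" using fs a pp[OF a] by simp
  next
    fix i assume i: "i < m"
    show "(\<Sum>a\<in>A. measure P {a} * F a i) = c (e i)"
      unfolding c_def F_def using pos by (intro sum.cong) (auto simp: p_def)
  next
    fix i assume i: "i < m"
    have ej: "e i \<in> J" using eJ[OF i] JsJ by auto
    have "(\<Sum>a\<in>A. measure P {a} * a * F a i) = (\<Sum>a\<in>A. \<sigma> a (e i) * a)"
      unfolding F_def using pos by (intro sum.cong) (auto simp: p_def)
    also have "\<dots> = (\<Sum>a\<in>A. \<sigma> a (e i) * (a - b (e i))) + (\<Sum>a\<in>A. \<sigma> a (e i)) * b (e i)"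
      by (simp add: algebra_simps sum.distrib sum_distrib_right sum_distrib_left sum_subtractf)
    also have "\<dots> = c (e i) * (b \<circ> e) i" using fs ej by (simp add: c_def)
    finally show "(\<Sum>a\<in>A. measure P {a} * a * F a i) = c (e i) * (b \<circ> e) i" .
  qed
qed

lemma smpc_decomp:
  fixes P Q :: "real measure"
  assumes fA: "finite A" and at: "atoms P = A" and pos: "\<forall>a\<in>A. measure P {a} > 0"
    and sm: "smpc_m P m Q"
  shows "finite_mixture (\<lambda>Q. \<exists>m\<le>card A. smpc_m P m Q) Q"
proof -
  obtain b q F where fa: "finite_atomic m b q Q" and F0: "\<forall>a\<in>A. \<forall>j<m. F a j \<ge> 0"
    and F1: "\<forall>a\<in>A. (\<Sum>j<m. F a j) = 1"
    and Fq: "\<forall>j<m. (\<Sum>a\<in>A. measure P {a} * F a j) = q j"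
    and Fb: "\<forall>j<m. (\<Sum>a\<in>A. measure P {a} * a * F a j) = q j * b j"
    using sm unfolding smpc_m_def at by blast
  define p where "p = (\<lambda>a. measure P {a})"
  define J where "J = {..<m}"
  have fJ: "finite J" by (simp add: J_def)
  have ib: "inj_on b J" using fa by (simp add: finite_atomic_def J_def)
  have qpos: "\<forall>j<m. q j > 0" using fa by (simp add: finite_atomic_def)
  have sQ: "sets Q = sets borel" using fa by (simp add: finite_atomic_def)
  have eQ: "\<forall>S \<in> sets borel. emeasure Q S = (\<Sum>j\<in>{j. j < m \<and> b j \<in> S}. ennreal (q j))"
    using fa by (simp add: finite_atomic_def)
  define \<pi> where "\<pi> = (\<lambda>a j. if a \<in> A \<and> j < m then p a * F a j else 0)"
  have f\<pi>: "feas A p J b \<pi>"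
    unfolding feas_def
  proof (intro conjI ballI allI impI)
    fix a j assume "a \<notin> A \<or> j \<notin> J" then show "\<pi> a j = 0" by (auto simp: \<pi>_def J_def)
  next
    fix a j assume "a \<in> A" "j \<in> J" then show "0 \<le> \<pi> a j"
      using pos F0 by (auto simp: \<pi>_def J_def p_def intro!: mult_nonneg_nonneg less_imp_le)
  next
    fix a assume a: "a \<in> A"
    have "(\<Sum>j\<in>J. \<pi> a j) = p a * (\<Sum>j<m. F a j)"
      using a by (simp add: \<pi>_def J_def sum_distrib_left)
    then show "(\<Sum>j\<in>J. \<pi> a j) = p a" using F1 a by simp
  next
    fix j assume j: "j \<in> J"
    have "(\<Sum>a\<in>A. \<pi> a j * (a - b j)) = (\<Sum>a\<in>A. p a * a * F a j) - b j * (\<Sum>a\<in>A. p a * F a j)"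
      using j by (simp add: \<pi>_def J_def algebra_simps sum_subtractf sum_distrib_left)
    then show "(\<Sum>a\<in>A. \<pi> a j * (a - b j)) = 0" using Fq Fb j by (simp add: J_def p_def)
  qed
  obtain K w \<sigma>s where mix: "\<forall>i<(K::nat). (0::real) \<le> w i \<and> feas A p J b (\<sigma>s i) \<and> card (cols A J (\<sigma>s i)) \<le> card A"
    "(\<Sum>i<K. w i) = 1" "\<forall>a j. \<pi> a j = (\<Sum>i<K. w i * \<sigma>s i a j)"
    using decomp[OF fA fJ f\<pi>] unfolding mixable_def by blast
  define Qs where "Qs = (\<lambda>i. mkQ J b (\<lambda>j. \<Sum>a\<in>A. \<sigma>s i a j))"
  have cnn: "0 \<le> (\<Sum>a\<in>A. \<sigma>s i a j)" if "i < K" "j \<in> J" for i j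
    using mix(1) that by (auto simp: feas_def intro!: sum_nonneg)
  show ?thesis unfolding finite_mixture_def
  proof (rule exI[of _ K], rule exI[of _ w], rule exI[of _ Qs], intro conjI)
    show "\<forall>i<K. 0 \<le> w i \<and> (\<exists>m\<le>card A. smpc_m P m (Qs i))"
    proof (intro allI impI conjI)
      fix i assume i: "i < K"
      show "0 \<le> w i" using mix(1) i by blast
      have "feas A (\<lambda>a. measure P {a}) J b (\<sigma>s i)" using mix(1) i by (simp add: p_def)
      from feas_smpc[OF fA fJ ib at pos this]
      show "\<exists>m\<le>card A. smpc_m P m (Qs i)" using mix(1) i unfolding Qs_def by blast
    qed
    show "(\<Sum>i<K. w i) = 1" by fact
    show "sets Q = sets borel" by fact
    show "\<forall>S\<in>sets borel. emeasure Q S = (\<Sum>i<K. ennreal (w i) * emeasure (Qs i) S)"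
    proof
      fix S :: "real set" assume S: "S \<in> sets borel"
      define T where "T = {j\<in>J. b j \<in> S}"
      have T: "{j. j < m \<and> b j \<in> S} = T" by (auto simp: T_def J_def)
      have fT: "finite T" using fJ by (simp add: T_def)
      have TJ: "T \<subseteq> J" by (auto simp: T_def)
      have qeq: "q j = (\<Sum>i<K. w i * (\<Sum>a\<in>A. \<sigma>s i a j))" if "j \<in> J" for j
      proof -
        have "q j = (\<Sum>a\<in>A. \<pi> a j)" using Fq that by (simp add: \<pi>_def J_def p_def)
        also have "\<dots> = (\<Sum>a\<in>A. \<Sum>i<K. w i * \<sigma>s i a j)" using mix(3) by simp
        also have "\<dots> = (\<Sum>i<K. w i * (\<Sum>a\<in>A. \<sigma>s i a j))"
          by (subst sum.swap) (simp add: sum_distrib_left)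
        finally show ?thesis .
      qed
      have nnT: "0 \<le> (\<Sum>j\<in>T. \<Sum>a\<in>A. \<sigma>s i a j)" if "i < K" for i
        using cnn TJ that by (intro sum_nonneg[of T]) auto
      have "emeasure Q S = (\<Sum>j\<in>T. ennreal (q j))" using eQ S T by simp
      also have "\<dots> = ennreal (\<Sum>j\<in>T. q j)" using qpos TJ by (intro sum_ennreal) (auto simp: J_def less_imp_le)
      also have "(\<Sum>j\<in>T. q j) = (\<Sum>j\<in>T. \<Sum>i<K. w i * (\<Sum>a\<in>A. \<sigma>s i a j))"
        using TJ qeq by (intro sum.cong) auto
      also have "\<dots> = (\<Sum>i<K. w i * (\<Sum>j\<in>T. \<Sum>a\<in>A. \<sigma>s i a j))"
        by (subst sum.swap) (simp add: sum_distrib_left)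
      also have "ennreal \<dots> = (\<Sum>i<K. ennreal (w i * (\<Sum>j\<in>T. \<Sum>a\<in>A. \<sigma>s i a j)))"
        using mix(1) nnT by (intro sum_ennreal[symmetric] mult_nonneg_nonneg) auto
      also have "\<dots> = (\<Sum>i<K. ennreal (w i) * emeasure (Qs i) S)"
      proof (rule sum.cong)
        fix i assume i: "i \<in> {..<K}"
        have "emeasure (Qs i) S = (\<Sum>j\<in>T. ennreal (\<Sum>a\<in>A. \<sigma>s i a j))"
          unfolding Qs_def T_def by (rule emeasure_mkQ[OF fJ S])
        also have "\<dots> = ennreal (\<Sum>j\<in>T. \<Sum>a\<in>A. \<sigma>s i a j)"
          using cnn i TJ by (intro sum_ennreal) auto
        finally show "ennreal (w i * (\<Sum>j\<in>T. \<Sum>a\<in>A. \<sigma>s i a j)) = ennreal (w i) * emeasure (Qs i) S"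
          using mix(1) i nnT by (simp add: ennreal_mult)
      qed simp
      finally show "emeasure Q S = (\<Sum>i<K. ennreal (w i) * emeasure (Qs i) S)" .
    qed
  qed
qed

lemma bw_fin:
  fixes f :: "nat \<Rightarrow> 'a \<Rightarrow> real"
  assumes "finite S" "\<forall>s\<in>S. \<forall>k. \<bar>f k s\<bar> \<le> B"
  shows "\<exists>r. strict_mono r \<and> (\<forall>s\<in>S. convergent (\<lambda>k. f (r k) s))"
  using assms
proof (induction S rule: finite_induct)
  case empty
  show ?case by (intro exI[of _ "\<lambda>k. k"]) (simp add: strict_mono_def)
next
  case (insert s S)
  then obtain r where r: "strict_mono r" "\<forall>s\<in>S. convergent (\<lambda>k. f (r k) s)" by auto
  have "bounded (range (\<lambda>k. f (r k) s))"
    using insert.prems by (intro boundedI[of _ B]) auto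
  then obtain l r2 where r2: "strict_mono r2" "((\<lambda>k. f (r k) s) \<circ> r2) \<longlonglongrightarrow> l"
    using bounded_imp_convergent_subsequence by blast
  have "strict_mono (r \<circ> r2)" using r(1) r2(1) by (rule strict_mono_o)
  moreover have "convergent (\<lambda>k. f ((r \<circ> r2) k) s)" using r2(2) by (auto simp: convergent_def o_def)
  moreover have "convergent (\<lambda>k. f ((r \<circ> r2) k) t)" if "t \<in> S" for t
  proof -
    have "convergent ((\<lambda>k. f (r k) t) \<circ> r2)" using r(2) that r2(1) by (intro convergent_subseq_convergent) auto
    then show ?thesis by (simp add: o_def)
  qed
  ultimately show ?case by blast
qed

lemma sep_h:
  fixes Y :: "real set"
  assumes "finite Y"
  shows "\<exists>h>0. \<forall>y\<in>Y. \<forall>y'\<in>Y. y \<noteq> y' \<longrightarrow> 2 * h < \<bar>y - y'\<bar>"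
proof -
  define D where "D = (\<lambda>(y,y'). \<bar>y - y'\<bar>) ` {z \<in> Y \<times> Y. fst z \<noteq> snd z}"
  have fD: "finite D" using assms by (simp add: D_def)
  have Dpos: "\<forall>d\<in>D. d > 0" by (auto simp: D_def)
  show ?thesis
  proof (cases "D = {}")
    case True
    then show ?thesis by (intro exI[of _ 1]) (auto simp: D_def)
  next
    case False
    have "Min D \<in> D" using fD False by simp
    then have mpos: "Min D > 0" using Dpos by blast
    show ?thesis
    proof (intro exI[of _ "Min D / 3"] conjI ballI impI)
      show "Min D / 3 > 0" using mpos by simp
      fix y y' assume "y \<in> Y" "y' \<in> Y" "y \<noteq> y'"
      then have "\<bar>y - y'\<bar> \<in> D" by (force simp: D_def)
      then have "Min D \<le> \<bar>y - y'\<bar>" using fD by simp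
      then show "2 * (Min D / 3) < \<bar>y - y'\<bar>" using mpos by simp
    qed
  qed
qed

lemma sum_if_le_one:
  fixes v :: real
  assumes "finite Y" "0 \<le> v" "\<forall>y\<in>Y. \<forall>y'\<in>Y. Pr y \<longrightarrow> Pr y' \<longrightarrow> y = y'"
  shows "(\<Sum>y\<in>Y. if Pr y then v else 0) \<le> v"
proof -
  have "(\<Sum>y\<in>Y. if Pr y then v else 0) = (\<Sum>y\<in>{y\<in>Y. Pr y}. v)"
    by (simp only: sum.inter_filter[OF assms(1)])
  also have "\<dots> = real (card {y\<in>Y. Pr y}) * v" by (rule sum_constant)
  also have "card {y\<in>Y. Pr y} \<le> Suc 0"
    using assms(1,3) by (subst card_le_Suc0_iff_eq) auto
  then have "real (card {y\<in>Y. Pr y}) * v \<le> 1 * v" using assms(2) by (intro mult_right_mono) auto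
  finally show ?thesis by simp
qed

lemma pw_bound:
  fixes q x y h d :: real
  assumes "0 \<le> q" "0 < d" "d \<le> h"
  shows "\<bar>if y - h < x \<and> x \<le> y + h then q * (x - y) else 0\<bar>
     \<le> d * q + h * (if y - h < x \<and> x \<le> y - d then q else 0) + h * (if y + d < x \<and> x \<le> y + h then q else 0)"
proof (cases "y - h < x \<and> x \<le> y + h")
  case False
  then show ?thesis using assms by auto
next
  case True
  define T1 where "T1 = (if y - h < x \<and> x \<le> y - d then q else 0)"
  define T2 where "T2 = (if y + d < x \<and> x \<le> y + h then q else 0)"
  have h0: "0 \<le> h" using assms by simp
  have t1: "0 \<le> h * T1" "0 \<le> h * T2" using assms h0 by (auto simp: T1_def T2_def)
  have dq: "0 \<le> d * q" using assms by simp
  have L: "\<bar>if y - h < x \<and> x \<le> y + h then q * (x - y) else 0\<bar> = q * \<bar>x - y\<bar>"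
    using True assms by (simp add: abs_mult)
  have main: "q * \<bar>x - y\<bar> \<le> d * q + h * T1 + h * T2"
  proof (cases "x \<le> y - d")
    case True2: True
    have "\<bar>x - y\<bar> \<le> h" using True by auto
    then have "q * \<bar>x - y\<bar> \<le> q * h" using assms by (intro mult_left_mono) auto
    moreover have "h * T1 = q * h" using True True2 by (simp add: T1_def)
    ultimately show ?thesis using t1 dq by linarith
  next
    case False2: False
    show ?thesis
    proof (cases "y + d < x")
      case True3: True
      have "\<bar>x - y\<bar> \<le> h" using True by auto
      then have "q * \<bar>x - y\<bar> \<le> q * h" using assms by (intro mult_left_mono) auto
      moreover have "h * T2 = q * h" using True True3 by (simp add: T2_def)
      ultimately show ?thesis using t1 dq by linarith
    next
      case False3: False
      have "\<bar>x - y\<bar> \<le> d" using False2 False3 by auto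
      then have "q * \<bar>x - y\<bar> \<le> q * d" using assms by (intro mult_left_mono) auto
      moreover have "q * d = d * q" by simp
      ultimately show ?thesis using t1 by linarith
    qed
  qed
  show ?thesis using main L unfolding T1_def T2_def by simp
qed

lemma core:
  fixes A Y :: "real set" and p r :: "real \<Rightarrow> real"
    and m :: "nat \<Rightarrow> nat" and bk :: "nat \<Rightarrow> nat \<Rightarrow> real" and \<pi>k :: "nat \<Rightarrow> real \<Rightarrow> nat \<Rightarrow> real"
  assumes fA: "finite A" and pp: "\<forall>a\<in>A. p a > 0" and sp: "(\<Sum>a\<in>A. p a) = 1"
    and fY: "finite Y" and sr: "(\<Sum>y\<in>Y. r y) = 1"
    and nn: "\<forall>k. \<forall>a\<in>A. \<forall>j<m k. \<pi>k k a j \<ge> 0"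
    and rows: "\<forall>k. \<forall>a\<in>A. (\<Sum>j<m k. \<pi>k k a j) = p a"
    and mart: "\<forall>k. \<forall>j<m k. (\<Sum>a\<in>A. \<pi>k k a j * (a - bk k j)) = 0"
    and conv: "\<forall>s t. s \<notin> Y \<longrightarrow> t \<notin> Y \<longrightarrow> s \<le> t \<longrightarrow>
       (\<lambda>k. \<Sum>j<m k. if s < bk k j \<and> bk k j \<le> t then (\<Sum>a\<in>A. \<pi>k k a j) else 0)
         \<longlonglongrightarrow> (\<Sum>y\<in>{y\<in>Y. s < y \<and> y \<le> t}. r y)"
  shows "\<exists>\<sigma>. (\<forall>a\<in>A. \<forall>y\<in>Y. \<sigma> a y \<ge> 0) \<and> (\<forall>a\<in>A. (\<Sum>y\<in>Y. \<sigma> a y) = p a) \<and>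
             (\<forall>y\<in>Y. (\<Sum>a\<in>A. \<sigma> a y) = r y) \<and> (\<forall>y\<in>Y. (\<Sum>a\<in>A. \<sigma> a y * (a - y)) = 0)"
proof -
  obtain h where h: "h > 0" "\<forall>y\<in>Y. \<forall>y'\<in>Y. y \<noteq> y' \<longrightarrow> 2 * h < \<bar>y - y'\<bar>"
    using sep_h[OF fY] by blast
  have notY: "y + d \<notin> Y" if "y \<in> Y" "0 < \<bar>d\<bar>" "\<bar>d\<bar> \<le> h" for y d
  proof
    assume "y + d \<in> Y"
    moreover have "y \<noteq> y + d" using that by auto
    ultimately have "2 * h < \<bar>y - (y + d)\<bar>" using h that by blast
    then show False using that h by simp
  qed
  define C where "C = (\<lambda>y x. y - h < x \<and> x \<le> y + h)"
  have uniq: "\<forall>y\<in>Y. \<forall>y'\<in>Y. C y x \<longrightarrow> C y' x \<longrightarrow> y = y'" for x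
  proof (intro ballI impI)
    fix y y' assume "y \<in> Y" "y' \<in> Y" "C y x" "C y' x"
    then show "y = y'" using h unfolding C_def by force
  qed
  define qk where "qk = (\<lambda>k j. \<Sum>a\<in>A. \<pi>k k a j)"
  define \<sigma>k where "\<sigma>k = (\<lambda>k a y. \<Sum>j<m k. if C y (bk k j) then \<pi>k k a j else 0)"
  have qnn: "qk k j \<ge> 0" if "j < m k" for k j
    using nn that unfolding qk_def by (intro sum_nonneg) auto
  have qtot: "(\<Sum>j<m k. qk k j) = 1" for k
  proof -
    have "(\<Sum>j<m k. qk k j) = (\<Sum>a\<in>A. \<Sum>j<m k. \<pi>k k a j)" unfolding qk_def by (rule sum.swap)
    also have "\<dots> = (\<Sum>a\<in>A. p a)" using rows by simp
    finally show ?thesis using sp by simp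
  qed
  have F1: "0 \<le> \<sigma>k k a y" if "a \<in> A" for k a y
    using nn that unfolding \<sigma>k_def by (intro sum_nonneg) auto
  have F2: "(\<Sum>y\<in>Y. \<sigma>k k a y) \<le> p a" if a: "a \<in> A" for k a
  proof -
    have "(\<Sum>y\<in>Y. \<sigma>k k a y) = (\<Sum>j<m k. \<Sum>y\<in>Y. if C y (bk k j) then \<pi>k k a j else 0)"
      unfolding \<sigma>k_def by (rule sum.swap)
    also have "\<dots> \<le> (\<Sum>j<m k. \<pi>k k a j)"
    proof (rule sum_mono)
      fix j assume "j \<in> {..<m k}"
      then have "0 \<le> \<pi>k k a j" using nn a by auto
      then show "(\<Sum>y\<in>Y. if C y (bk k j) then \<pi>k k a j else 0) \<le> \<pi>k k a j"
        using sum_if_le_one[OF fY _ uniq] by blast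
    qed
    finally show ?thesis using rows a by simp
  qed
  have ple1: "p a \<le> 1" if "a \<in> A" for a
  proof -
    have "p a \<le> (\<Sum>a\<in>A. p a)" by (rule member_le_sum) (use that fA pp in \<open>auto simp: less_imp_le\<close>)
    then show ?thesis using sp by simp
  qed
  have F2': "\<sigma>k k a y \<le> p a" if "a \<in> A" "y \<in> Y" for k a y
  proof -
    have "\<sigma>k k a y \<le> (\<Sum>y\<in>Y. \<sigma>k k a y)" using that F1 fY by (intro member_le_sum) auto
    then show ?thesis using F2[OF that(1), of k] by simp
  qed
  have swapq: "(\<Sum>a\<in>A. \<Sum>j<m k. if Pr j then \<pi>k k a j * g j else 0) = (\<Sum>j<m k. if Pr j then qk k j * g j else 0)"
    for k Pr g
  proof -
    have "(\<Sum>a\<in>A. \<Sum>j<m k. if Pr j then \<pi>k k a j * g j else 0) = (\<Sum>j<m k. \<Sum>a\<in>A. if Pr j then \<pi>k k a j * g j else 0)"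
      by (rule sum.swap)
    also have "\<dots> = (\<Sum>j<m k. if Pr j then qk k j * g j else 0)"
      unfolding qk_def by (intro sum.cong) (auto simp: sum_distrib_right)
    finally show ?thesis .
  qed
  have F3: "(\<lambda>k. \<Sum>a\<in>A. \<sigma>k k a y) \<longlonglongrightarrow> r y" if y: "y \<in> Y" for y
  proof -
    have e: "(\<Sum>a\<in>A. \<sigma>k k a y) = (\<Sum>j<m k. if y - h < bk k j \<and> bk k j \<le> y + h then qk k j else 0)" for k
      using swapq[where k=k and Pr="\<lambda>j. C y (bk k j)" and g="\<lambda>_. 1"] unfolding \<sigma>k_def C_def mult_1_right .
    have n1: "y - h \<notin> Y" using notY[OF y, of "-h"] h by simp
    have n2: "y + h \<notin> Y" using notY[OF y, of "h"] h by simp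
    have single: "{y'\<in>Y. y - h < y' \<and> y' \<le> y + h} = {y}"
    proof (intro equalityI subsetI)
      fix y' assume "y' \<in> {y'\<in>Y. y - h < y' \<and> y' \<le> y + h}"
      then have "y' \<in> Y" "C y y'" by (auto simp: C_def)
      moreover have "C y' y'" using h by (simp add: C_def)
      ultimately show "y' \<in> {y}" using uniq[of y'] y by blast
    next
      fix y' assume "y' \<in> {y}" then show "y' \<in> {y'\<in>Y. y - h < y' \<and> y' \<le> y + h}" using y h by simp
    qed
    have "(\<lambda>k. \<Sum>j<m k. if y - h < bk k j \<and> bk k j \<le> y + h then qk k j else 0)
        \<longlonglongrightarrow> (\<Sum>y'\<in>{y'\<in>Y. y - h < y' \<and> y' \<le> y + h}. r y')"
    proof -
      have "y - h \<le> y + h" using h by simp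
      from conv[rule_format, OF n1 n2 this] show ?thesis unfolding qk_def .
    qed
    then show ?thesis unfolding e single by simp
  qed
  have F4: "(\<lambda>k. \<Sum>a\<in>A. \<sigma>k k a y * (a - y)) \<longlonglongrightarrow> 0" if y: "y \<in> Y" for y
  proof -
    define M where "M = (\<lambda>k. \<Sum>j<m k. if y - h < bk k j \<and> bk k j \<le> y + h then qk k j * (bk k j - y) else 0)"
    have pj: "(\<Sum>a\<in>A. \<pi>k k a j * (a - y)) = qk k j * (bk k j - y)" if j: "j < m k" for k j
    proof -
      have "(\<Sum>a\<in>A. \<pi>k k a j * (a - y)) = (\<Sum>a\<in>A. \<pi>k k a j * (a - bk k j) + \<pi>k k a j * (bk k j - y))"
        by (intro sum.cong) (auto simp: algebra_simps)
      also have "\<dots> = (\<Sum>a\<in>A. \<pi>k k a j * (a - bk k j)) + (\<Sum>a\<in>A. \<pi>k k a j) * (bk k j - y)"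
        by (simp add: sum.distrib sum_distrib_right)
      finally show ?thesis using mart j by (simp add: qk_def)
    qed
    have eM: "(\<Sum>a\<in>A. \<sigma>k k a y * (a - y)) = M k" for k
    proof -
      have "(\<Sum>a\<in>A. \<sigma>k k a y * (a - y)) = (\<Sum>a\<in>A. \<Sum>j<m k. if C y (bk k j) then \<pi>k k a j * (a - y) else 0)"
        unfolding \<sigma>k_def sum_distrib_right by (intro sum.cong refl) auto
      also have "\<dots> = (\<Sum>j<m k. \<Sum>a\<in>A. if C y (bk k j) then \<pi>k k a j * (a - y) else 0)"
        by (rule sum.swap)
      also have "\<dots> = M k" unfolding M_def C_def
        by (intro sum.cong refl) (auto simp: pj)
      finally show ?thesis .
    qed
    define I1 where "I1 = (\<lambda>d k. \<Sum>j<m k. if y - h < bk k j \<and> bk k j \<le> y - d then qk k j else 0)"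
    define I2 where "I2 = (\<lambda>d k. \<Sum>j<m k. if y + d < bk k j \<and> bk k j \<le> y + h then qk k j else 0)"
    have bound: "\<bar>M k\<bar> \<le> d + h * (I1 d k + I2 d k)" if d: "0 < d" "d \<le> h" for d k
    proof -
      have "\<bar>M k\<bar> \<le> (\<Sum>j<m k. \<bar>if y - h < bk k j \<and> bk k j \<le> y + h then qk k j * (bk k j - y) else 0\<bar>)"
        unfolding M_def by (rule sum_abs)
      also have "\<dots> \<le> (\<Sum>j<m k. d * qk k j + h * (if y - h < bk k j \<and> bk k j \<le> y - d then qk k j else 0)
                   + h * (if y + d < bk k j \<and> bk k j \<le> y + h then qk k j else 0))"
        using qnn d by (intro sum_mono pw_bound) auto
      also have "\<dots> = d * (\<Sum>j<m k. qk k j) + h * (I1 d k + I2 d k)"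
        unfolding I1_def I2_def by (simp add: sum.distrib sum_distrib_left algebra_simps)
      finally show ?thesis using qtot[of k] by simp
    qed
    have empty1: "{y'\<in>Y. s < y' \<and> y' \<le> t} = {}" if "y - h \<le> s" "t \<le> y + h" "y \<notin> {s<..t}" for s t
    proof (rule ccontr)
      assume "{y'\<in>Y. s < y' \<and> y' \<le> t} \<noteq> {}"
      then obtain y' where y': "y' \<in> Y" "s < y'" "y' \<le> t" by auto
      then have "C y y'" "C y' y'" using that h by (auto simp: C_def)
      then have "y' = y" using uniq[of y'] y y' by blast
      then show False using that y' by auto
    qed
    have lim1: "(\<lambda>k. I1 d k) \<longlonglongrightarrow> 0" if d: "0 < d" "d \<le> h" for d
    proof -
      have n1: "y - h \<notin> Y" using notY[OF y, of "-h"] h by simp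
      have n2: "y - d \<notin> Y" using notY[OF y, of "-d"] d by simp
      have "y - h \<le> y - d" using d by simp
      from conv[rule_format, OF n1 n2 this]
      have "(\<lambda>k. I1 d k) \<longlonglongrightarrow> (\<Sum>y'\<in>{y'\<in>Y. y - h < y' \<and> y' \<le> y - d}. r y')"
        unfolding I1_def qk_def .
      moreover have "{y'\<in>Y. y - h < y' \<and> y' \<le> y - d} = {}" using d by (intro empty1) auto
      ultimately show ?thesis by simp
    qed
    have lim2: "(\<lambda>k. I2 d k) \<longlonglongrightarrow> 0" if d: "0 < d" "d \<le> h" for d
    proof -
      have n1: "y + d \<notin> Y" using notY[OF y, of "d"] d by simp
      have n2: "y + h \<notin> Y" using notY[OF y, of "h"] h by simp
      have "y + d \<le> y + h" using d by simp
      from conv[rule_format, OF n1 n2 this]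
      have "(\<lambda>k. I2 d k) \<longlonglongrightarrow> (\<Sum>y'\<in>{y'\<in>Y. y + d < y' \<and> y' \<le> y + h}. r y')"
        unfolding I2_def qk_def .
      moreover have "{y'\<in>Y. y + d < y' \<and> y' \<le> y + h} = {}" using d by (intro empty1) auto
      ultimately show ?thesis by simp
    qed
    have "M \<longlonglongrightarrow> 0"
      unfolding LIMSEQ_iff
    proof (intro allI impI)
      fix e :: real assume e: "0 < e"
      define d where "d = min h (e / 2)"
      have d: "0 < d" "d \<le> h" "d \<le> e / 2" using e h by (auto simp: d_def)
      have "(\<lambda>k. h * (I1 d k + I2 d k)) \<longlonglongrightarrow> h * (0 + 0)"
        by (intro tendsto_mult tendsto_const tendsto_add lim1 lim2 d)
      then obtain N where N: "\<forall>n\<ge>N. norm (h * (I1 d n + I2 d n) - 0) < e / 2"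
        unfolding LIMSEQ_iff using e by (metis add_0 half_gt_zero mult_zero_right)
      show "\<exists>no. \<forall>n\<ge>no. norm (M n - 0) < e"
      proof (intro exI[of _ N] allI impI)
        fix n assume "N \<le> n"
        then have "\<bar>h * (I1 d n + I2 d n)\<bar> < e / 2" using N by simp
        moreover have "\<bar>M n\<bar> \<le> d + h * (I1 d n + I2 d n)" using bound[OF d(1,2)] .
        ultimately show "norm (M n - 0) < e" using d by simp
      qed
    qed
    then show ?thesis unfolding eM[abs_def] by simp
  qed
  have bnd: "\<forall>s\<in>A \<times> Y. \<forall>k. \<bar>(\<lambda>k s. \<sigma>k k (fst s) (snd s)) k s\<bar> \<le> 1"
  proof (intro ballI allI)
    fix s k assume s: "s \<in> A \<times> Y"
    have "0 \<le> \<sigma>k k (fst s) (snd s)" using F1 s by auto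
    moreover have "\<sigma>k k (fst s) (snd s) \<le> 1" using F2'[of "fst s" "snd s" k] ple1[of "fst s"] s by auto
    ultimately show "\<bar>(\<lambda>k s. \<sigma>k k (fst s) (snd s)) k s\<bar> \<le> 1" by simp
  qed
  obtain rr where rr: "strict_mono rr" "\<forall>s\<in>A \<times> Y. convergent (\<lambda>k. \<sigma>k (rr k) (fst s) (snd s))"
    using bw_fin[OF _ bnd] fA fY by auto
  define \<sigma> where "\<sigma> = (\<lambda>a y. lim (\<lambda>k. \<sigma>k (rr k) a y))"
  have L: "(\<lambda>k. \<sigma>k (rr k) a y) \<longlonglongrightarrow> \<sigma> a y" if "a \<in> A" "y \<in> Y" for a y
    using rr(2) that unfolding \<sigma>_def by (auto simp: convergent_LIMSEQ_iff)
  have sub: "(\<lambda>k. X (rr k)) \<longlonglongrightarrow> l" if "X \<longlonglongrightarrow> l" for X :: "nat \<Rightarrow> real" and l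
    using LIMSEQ_subseq_LIMSEQ[OF that rr(1)] by (simp add: o_def)
  have G0: "\<forall>a\<in>A. \<forall>y\<in>Y. \<sigma> a y \<ge> 0"
  proof (intro ballI)
    fix a y assume a: "a \<in> A" and y: "y \<in> Y"
    show "0 \<le> \<sigma> a y"
      by (rule LIMSEQ_le_const[OF L[OF a y]]) (use F1[OF a] in blast)
  qed
  have G3: "\<forall>y\<in>Y. (\<Sum>a\<in>A. \<sigma> a y) = r y"
  proof
    fix y assume y: "y \<in> Y"
    have "(\<lambda>k. \<Sum>a\<in>A. \<sigma>k (rr k) a y) \<longlonglongrightarrow> (\<Sum>a\<in>A. \<sigma> a y)" using L y by (intro tendsto_sum) auto
    moreover have "(\<lambda>k. \<Sum>a\<in>A. \<sigma>k (rr k) a y) \<longlonglongrightarrow> r y" using sub[OF F3[OF y]] .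
    ultimately show "(\<Sum>a\<in>A. \<sigma> a y) = r y" by (rule LIMSEQ_unique)
  qed
  have G4: "\<forall>y\<in>Y. (\<Sum>a\<in>A. \<sigma> a y * (a - y)) = 0"
  proof
    fix y assume y: "y \<in> Y"
    have "(\<lambda>k. \<Sum>a\<in>A. \<sigma>k (rr k) a y * (a - y)) \<longlonglongrightarrow> (\<Sum>a\<in>A. \<sigma> a y * (a - y))"
      using L y by (intro tendsto_sum tendsto_mult tendsto_const) auto
    moreover have "(\<lambda>k. \<Sum>a\<in>A. \<sigma>k (rr k) a y * (a - y)) \<longlonglongrightarrow> 0" using sub[OF F4[OF y]] .
    ultimately show "(\<Sum>a\<in>A. \<sigma> a y * (a - y)) = 0" by (rule LIMSEQ_unique)
  qed
  have G2le: "(\<Sum>y\<in>Y. \<sigma> a y) \<le> p a" if a: "a \<in> A" for a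
  proof -
    have "(\<lambda>k. \<Sum>y\<in>Y. \<sigma>k (rr k) a y) \<longlonglongrightarrow> (\<Sum>y\<in>Y. \<sigma> a y)" using L a by (intro tendsto_sum) auto
    then show ?thesis by (rule LIMSEQ_le_const2) (use F2[OF a] in blast)
  qed
  have "(\<Sum>a\<in>A. p a - (\<Sum>y\<in>Y. \<sigma> a y)) = (\<Sum>a\<in>A. p a) - (\<Sum>y\<in>Y. \<Sum>a\<in>A. \<sigma> a y)"
    by (simp add: sum_subtractf sum.swap[of _ Y A])
  also have "\<dots> = 0" using sp sr G3 by simp
  finally have "\<forall>a\<in>A. p a - (\<Sum>y\<in>Y. \<sigma> a y) = 0"
    using sum_nonneg_eq_0_iff[OF fA, of "\<lambda>a. p a - (\<Sum>y\<in>Y. \<sigma> a y)"] G2le by simp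
  then have G2: "\<forall>a\<in>A. (\<Sum>y\<in>Y. \<sigma> a y) = p a" by simp
  show ?thesis using G0 G2 G3 G4 by blast
qed

lemma cdf_fa:
  assumes "finite_atomic m b q Q"
  shows "cdf Q x = (\<Sum>j<m. if b j \<le> x then q j else 0)"
proof -
  have qp: "\<forall>j<m. q j > 0" and eQ: "\<forall>S \<in> sets borel. emeasure Q S = (\<Sum>j\<in>{j. j < m \<and> b j \<in> S}. ennreal (q j))"
    using assms by (auto simp: finite_atomic_def)
  have "emeasure Q {..x} = (\<Sum>j\<in>{j. j < m \<and> b j \<in> {..x}}. ennreal (q j))" using eQ by simp
  also have "\<dots> = ennreal (\<Sum>j\<in>{j. j < m \<and> b j \<in> {..x}}. q j)" using qp by (intro sum_ennreal) (auto simp: less_imp_le)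
  moreover have "0 \<le> (\<Sum>j\<in>{j. j < m \<and> b j \<in> {..x}}. q j)"
    by (rule sum_nonneg) (use qp in \<open>auto simp: less_imp_le\<close>)
  ultimately have "measure Q {..x} = (\<Sum>j\<in>{j. j < m \<and> b j \<in> {..x}}. q j)"
    unfolding measure_def by simp
  also have "\<dots> = (\<Sum>j<m. if b j \<le> x then q j else 0)"
    by (simp add: sum.inter_filter[symmetric] lessThan_def)
  finally show ?thesis by (simp add: cdf_def)
qed

lemma finite_mpc_smpc:
  fixes P R :: "real measure" and Qs :: "nat \<Rightarrow> real measure"
  assumes Pp: "prob_space P" and sP: "sets P = sets borel" and fA: "finite A"
    and PA: "emeasure P A = 1" and pos: "\<forall>a\<in>A. measure P {a} > 0"
    and RD: "real_distribution R" and sm: "\<forall>k. smpc P (Qs k)" and wc: "weak_conv_m Qs R"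
    and fB: "finite B" and RB: "emeasure R B = 1"
  shows "\<exists>m. smpc_m P m R"
proof -
  interpret R: real_distribution R by fact
  have at: "atoms P = A" using atoms_eq[OF Pp sP fA PA pos] .
  define p where "p = (\<lambda>a. measure P {a})"
  define r where "r = (\<lambda>y. measure R {y})"
  define Y where "Y = {y\<in>B. r y > 0}"
  have fY: "finite Y" using fB by (simp add: Y_def)
  have Rrep: "measure R S = (\<Sum>y\<in>S \<inter> Y. r y)" if S: "S \<in> sets borel" for S
  proof -
    have "measure R S = (\<Sum>x\<in>S \<inter> B. measure R {x})"
      by (rule fin_repr[OF R.prob_space_axioms R.events_eq_borel fB RB S])
    also have "\<dots> = (\<Sum>y\<in>S \<inter> Y. measure R {y})"
    proof (rule sum.mono_neutral_right)
      show "finite (S \<inter> B)" using fB by simp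
      show "S \<inter> Y \<subseteq> S \<inter> B" by (auto simp: Y_def)
      show "\<forall>i\<in>S \<inter> B - S \<inter> Y. measure R {i} = 0"
        by (auto simp: Y_def r_def) (metis measure_nonneg order_le_less)
    qed
    finally show ?thesis by (simp add: r_def)
  qed
  have sr: "(\<Sum>y\<in>Y. r y) = 1"
    using Rrep[of UNIV] R.prob_space R.events_eq_borel by (simp add: sets_eq_imp_space_eq[OF R.events_eq_borel])
  have sp: "(\<Sum>a\<in>A. p a) = 1"
  proof -
    have "measure P A = (\<Sum>x\<in>A \<inter> A. measure P {x})"
      by (rule fin_repr[OF Pp sP fA PA]) (simp add: borel_closed finite_imp_closed fA)
    moreover have "measure P A = 1" using PA by (simp add: measure_def)
    ultimately show ?thesis by (simp add: p_def)
  qed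
  have pp: "\<forall>a\<in>A. p a > 0" using pos by (simp add: p_def)
  obtain mm where mm: "\<forall>k. smpc_m P (mm k) (Qs k)" using sm unfolding smpc_def by metis
  have H: "\<forall>k. \<exists>b q F. finite_atomic (mm k) b q (Qs k) \<and>
     (\<forall>a\<in>A. \<forall>j<mm k. F a j \<ge> (0::real)) \<and>
     (\<forall>a\<in>A. (\<Sum>j<mm k. F a j) = 1) \<and>
     (\<forall>j<mm k. (\<Sum>a\<in>A. measure P {a} * F a j) = q j) \<and>
     (\<forall>j<mm k. (\<Sum>a\<in>A. measure P {a} * a * F a j) = q j * b j)"
    using mm unfolding smpc_m_def at by blast
  obtain bb where "\<forall>k. \<exists>q F. finite_atomic (mm k) (bb k) q (Qs k) \<and>
     (\<forall>a\<in>A. \<forall>j<mm k. F a j \<ge> (0::real)) \<and>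
     (\<forall>a\<in>A. (\<Sum>j<mm k. F a j) = 1) \<and>
     (\<forall>j<mm k. (\<Sum>a\<in>A. measure P {a} * F a j) = q j) \<and>
     (\<forall>j<mm k. (\<Sum>a\<in>A. measure P {a} * a * F a j) = q j * bb k j)"
    using choice[OF H] by blast
  from choice[OF this] obtain qq where "\<forall>k. \<exists>F. finite_atomic (mm k) (bb k) (qq k) (Qs k) \<and>
     (\<forall>a\<in>A. \<forall>j<mm k. F a j \<ge> (0::real)) \<and>
     (\<forall>a\<in>A. (\<Sum>j<mm k. F a j) = 1) \<and>
     (\<forall>j<mm k. (\<Sum>a\<in>A. measure P {a} * F a j) = qq k j) \<and>
     (\<forall>j<mm k. (\<Sum>a\<in>A. measure P {a} * a * F a j) = qq k j * bb k j)" by blast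
  from choice[OF this] obtain FF where FF: "\<forall>k. finite_atomic (mm k) (bb k) (qq k) (Qs k) \<and>
     (\<forall>a\<in>A. \<forall>j<mm k. FF k a j \<ge> (0::real)) \<and>
     (\<forall>a\<in>A. (\<Sum>j<mm k. FF k a j) = 1) \<and>
     (\<forall>j<mm k. (\<Sum>a\<in>A. measure P {a} * FF k a j) = qq k j) \<and>
     (\<forall>j<mm k. (\<Sum>a\<in>A. measure P {a} * a * FF k a j) = qq k j * bb k j)" by blast
  define \<pi>k where "\<pi>k = (\<lambda>k a j. p a * FF k a j)"
  have nn: "\<forall>k. \<forall>a\<in>A. \<forall>j<mm k. \<pi>k k a j \<ge> 0"
  proof (intro allI ballI impI)
    fix k a j assume a: "a \<in> A" and j: "j < mm k"
    have "0 \<le> FF k a j" using FF a j by blast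
    moreover have "0 \<le> p a" using pp a by (simp add: less_imp_le)
    ultimately show "0 \<le> \<pi>k k a j" by (simp add: \<pi>k_def)
  qed
  have rows: "\<forall>k. \<forall>a\<in>A. (\<Sum>j<mm k. \<pi>k k a j) = p a"
    using FF by (simp add: \<pi>k_def sum_distrib_left[symmetric])
  have qsum: "(\<Sum>a\<in>A. \<pi>k k a j) = qq k j" if "j < mm k" for k j
    using FF that by (simp add: \<pi>k_def p_def)
  have mart: "\<forall>k. \<forall>j<mm k. (\<Sum>a\<in>A. \<pi>k k a j * (a - bb k j)) = 0"
  proof (intro allI impI)
    fix k j assume j: "j < mm k"
    have "(\<Sum>a\<in>A. \<pi>k k a j * (a - bb k j)) = (\<Sum>a\<in>A. p a * a * FF k a j) - bb k j * (\<Sum>a\<in>A. p a * FF k a j)"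
      by (simp add: \<pi>k_def algebra_simps sum_subtractf sum_distrib_left)
    then show "(\<Sum>a\<in>A. \<pi>k k a j * (a - bb k j)) = 0" using FF j by (simp add: p_def)
  qed
  have cdfR: "cdf R x = (\<Sum>y\<in>{y\<in>Y. y \<le> x}. r y)" for x
  proof -
    have "cdf R x = (\<Sum>y\<in>{..x} \<inter> Y. r y)" unfolding cdf_def by (rule Rrep) simp
    also have "{..x} \<inter> Y = {y\<in>Y. y \<le> x}" by auto
    finally show ?thesis .
  qed
  have conv: "\<forall>s t. s \<notin> Y \<longrightarrow> t \<notin> Y \<longrightarrow> s \<le> t \<longrightarrow>
       (\<lambda>k. \<Sum>j<mm k. if s < bb k j \<and> bb k j \<le> t then (\<Sum>a\<in>A. \<pi>k k a j) else 0)
         \<longlonglongrightarrow> (\<Sum>y\<in>{y\<in>Y. s < y \<and> y \<le> t}. r y)"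
  proof (intro allI impI)
    fix s t assume s: "s \<notin> Y" and t: "t \<notin> Y" and st: "s \<le> t"
    have cont: "isCont (cdf R) x" if "x \<notin> Y" for x
    proof -
      have "measure R {x} = (\<Sum>y\<in>{x} \<inter> Y. r y)" by (rule Rrep) simp
      also have "{x} \<inter> Y = {}" using that by auto
      finally show ?thesis using R.isCont_cdf by simp
    qed
    have lim: "(\<lambda>k. cdf (Qs k) t - cdf (Qs k) s) \<longlonglongrightarrow> cdf R t - cdf R s"
      using wc cont[OF s] cont[OF t] unfolding weak_conv_m_def weak_conv_def
      by (intro tendsto_diff) auto
    have e1: "cdf (Qs k) t - cdf (Qs k) s = (\<Sum>j<mm k. if s < bb k j \<and> bb k j \<le> t then (\<Sum>a\<in>A. \<pi>k k a j) else 0)" for k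
    proof -
      have "cdf (Qs k) t - cdf (Qs k) s = (\<Sum>j<mm k. (if bb k j \<le> t then qq k j else 0) - (if bb k j \<le> s then qq k j else 0))"
        using cdf_fa[of "mm k" "bb k" "qq k" "Qs k"] FF by (simp add: sum_subtractf)
      also have "\<dots> = (\<Sum>j<mm k. if s < bb k j \<and> bb k j \<le> t then (\<Sum>a\<in>A. \<pi>k k a j) else 0)"
        using st qsum by (intro sum.cong refl) auto
      finally show ?thesis .
    qed
    have e2: "cdf R t - cdf R s = (\<Sum>y\<in>{y\<in>Y. s < y \<and> y \<le> t}. r y)"
    proof -
      have "{y\<in>Y. y \<le> t} = {y\<in>Y. y \<le> s} \<union> {y\<in>Y. s < y \<and> y \<le> t}" using st by auto
      then have "(\<Sum>y\<in>{y\<in>Y. y \<le> t}. r y) = (\<Sum>y\<in>{y\<in>Y. y \<le> s}. r y) + (\<Sum>y\<in>{y\<in>Y. s < y \<and> y \<le> t}. r y)"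
        using fY by (simp add: sum.union_disjoint disjoint_iff)
      then show ?thesis unfolding cdfR by simp
    qed
    show "(\<lambda>k. \<Sum>j<mm k. if s < bb k j \<and> bb k j \<le> t then (\<Sum>a\<in>A. \<pi>k k a j) else 0)
         \<longlonglongrightarrow> (\<Sum>y\<in>{y\<in>Y. s < y \<and> y \<le> t}. r y)"
      using lim unfolding e1 e2 .
  qed
  obtain \<sigma> where \<sigma>: "\<forall>a\<in>A. \<forall>y\<in>Y. \<sigma> a y \<ge> 0" "\<forall>a\<in>A. (\<Sum>y\<in>Y. \<sigma> a y) = p a"
    "\<forall>y\<in>Y. (\<Sum>a\<in>A. \<sigma> a y) = r y" "\<forall>y\<in>Y. (\<Sum>a\<in>A. \<sigma> a y * (a - y)) = 0"
    using core[OF fA pp sp fY sr nn rows mart conv] by blast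
  obtain e where e: "bij_betw e {..<card Y} Y"
    using ex_bij_betw_nat_finite[OF fY] by (auto simp: atLeast0LessThan)
  have eY: "i < card Y \<Longrightarrow> e i \<in> Y" for i using e by (auto simp: bij_betw_def)
  have ie: "inj_on e {..<card Y}" using e by (auto simp: bij_betw_def)
  have eimg: "e ` {..<card Y} = Y" using e by (auto simp: bij_betw_def)
  have reidx: "(\<Sum>y\<in>Y. g y) = (\<Sum>i<card Y. g (e i))" for g :: "real \<Rightarrow> real"
    using sum.reindex[OF ie, of g] eimg by simp
  define F where "F = (\<lambda>a i. \<sigma> a (e i) / p a)"
  show ?thesis unfolding smpc_m_def at
  proof (rule exI[of _ "card Y"], rule exI[of _ e], rule exI[of _ "\<lambda>i. r (e i)"], rule exI[of _ F], intro conjI ballI allI impI)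
    show "finite_atomic (card Y) e (\<lambda>i. r (e i)) R"
      unfolding finite_atomic_def
    proof (intro conjI ballI allI impI)
      show "sets R = sets borel" by simp
      show "inj_on e {..<card Y}" by fact
      fix j assume "j < card Y" then show "0 < r (e j)" using eY by (auto simp: Y_def)
    next
      fix S :: "real set" assume S: "S \<in> sets borel"
      have "emeasure R S = ennreal (measure R S)" by (simp add: R.emeasure_eq_measure)
      also have "measure R S = (\<Sum>y\<in>Y. if y \<in> S then r y else 0)"
        using Rrep[OF S] fY by (simp add: sum.inter_filter[symmetric] Int_def conj_commute)
      also have "\<dots> = (\<Sum>i<card Y. if e i \<in> S then r (e i) else 0)" by (rule reidx)
      also have "\<dots> = (\<Sum>i\<in>{i. i < card Y \<and> e i \<in> S}. r (e i))"
        by (simp add: sum.inter_filter[symmetric] lessThan_def)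
      also have "ennreal \<dots> = (\<Sum>i\<in>{i. i < card Y \<and> e i \<in> S}. ennreal (r (e i)))"
        using eY by (intro sum_ennreal[symmetric]) (auto simp: Y_def less_imp_le)
      finally show "emeasure R S = (\<Sum>i\<in>{i. i < card Y \<and> e i \<in> S}. ennreal (r (e i)))" .
    qed
  next
    fix a i assume a: "a \<in> A" and i: "i < card Y"
    show "0 \<le> F a i" using \<sigma>(1) a eY[OF i] pp by (auto simp: F_def)
  next
    fix a assume a: "a \<in> A"
    have "(\<Sum>i<card Y. F a i) = (\<Sum>i<card Y. \<sigma> a (e i)) / p a" by (simp add: F_def sum_divide_distrib)
    also have "(\<Sum>i<card Y. \<sigma> a (e i)) = (\<Sum>y\<in>Y. \<sigma> a y)" by (rule reidx[symmetric])
    moreover have "p a > 0" using pp a by blast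
    ultimately show "(\<Sum>i<card Y. F a i) = 1" using \<sigma>(2) a by simp
  next
    fix i assume i: "i < card Y"
    have "(\<Sum>a\<in>A. measure P {a} * F a i) = (\<Sum>a\<in>A. \<sigma> a (e i))"
      unfolding F_def using pos by (intro sum.cong) (auto simp: p_def)
    then show "(\<Sum>a\<in>A. measure P {a} * F a i) = r (e i)" using \<sigma>(3) eY[OF i] by simp
  next
    fix i assume i: "i < card Y"
    have "(\<Sum>a\<in>A. measure P {a} * a * F a i) = (\<Sum>a\<in>A. \<sigma> a (e i) * a)"
      unfolding F_def using pos by (intro sum.cong) (auto simp: p_def)
    also have "\<dots> = (\<Sum>a\<in>A. \<sigma> a (e i) * (a - e i)) + (\<Sum>a\<in>A. \<sigma> a (e i)) * e i"
      by (simp add: algebra_simps sum.distrib sum_distrib_right sum_distrib_left sum_subtractf)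
    also have "\<dots> = r (e i) * e i" using \<sigma>(3,4) eY[OF i] by simp
    finally show "(\<Sum>a\<in>A. measure P {a} * a * F a i) = r (e i) * e i" .
  qed
qed

theorem corollary1:
  fixes P R :: "real measure" and A :: "real set" and n :: nat
  assumes "prob_space P" and "sets P = sets borel"
    and "finite A" and "card A = n"
    and "emeasure P A = 1" and "\<forall>a\<in>A. measure P {a} > 0"
    and "mpc P R"
  shows "(\<exists>Rs. (\<forall>k. finite_mixture (\<lambda>Q. \<exists>m\<le>n. smpc_m P m Q) (Rs k)) \<and> weak_conv_m Rs R)
       \<and> ((\<exists>B. finite B \<and> B \<in> sets borel \<and> emeasure R B = 1)
            \<longrightarrow> finite_mixture (\<lambda>Q. \<exists>m\<le>n. smpc_m P m Q) R)"
proof -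
  have at: "atoms P = A" by (rule atoms_eq[OF assms(1,2,3,5,6)])
  have L1: "finite_mixture (\<lambda>Q. \<exists>m\<le>n. smpc_m P m Q) Q" if "smpc_m P m Q" for m Q
    unfolding assms(4)[symmetric] by (rule smpc_decomp[OF assms(3) at assms(6) that])
  obtain Qs where RD: "real_distribution R" and sm: "\<forall>k. smpc P (Qs k)" and wc: "weak_conv_m Qs R"
    using assms(7) unfolding mpc_def by blast
  have part1: "\<exists>Rs. (\<forall>k. finite_mixture (\<lambda>Q. \<exists>m\<le>n. smpc_m P m Q) (Rs k)) \<and> weak_conv_m Rs R"
  proof (intro exI[of _ Qs] conjI allI)
    fix k
    obtain m where "smpc_m P m (Qs k)" using sm unfolding smpc_def by blast
    then show "finite_mixture (\<lambda>Q. \<exists>m\<le>n. smpc_m P m Q) (Qs k)" by (rule L1)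
  qed (rule wc)
  have part2: "finite_mixture (\<lambda>Q. \<exists>m\<le>n. smpc_m P m Q) R"
    if "\<exists>B. finite B \<and> B \<in> sets borel \<and> emeasure R B = 1"
  proof -
    from that obtain B where B: "finite B" "emeasure R B = 1" by auto
    obtain m where "smpc_m P m R"
      using finite_mpc_smpc[OF assms(1,2,3,5,6) RD sm wc B] by auto
    then show ?thesis by (rule L1)
  qed
  show ?thesis
  proof (intro conjI impI)
    show "\<exists>Rs. (\<forall>k. finite_mixture (\<lambda>Q. \<exists>m\<le>n. smpc_m P m Q) (Rs k)) \<and> weak_conv_m Rs R"
      by (rule part1)
  next
    assume "\<exists>B. finite B \<and> B \<in> sets borel \<and> emeasure R B = 1"
    then show "finite_mixture (\<lambda>Q. \<exists>m\<le>n. smpc_m P m Q) R" by (rule part2)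
  qed
qed

end
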